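(* Let $G$ be a finite abelian group. Let $n \in \mathbb{N}_0$ and let $\overline{\ell}=(\ell_1,\dots, \ell_n) \in \mathbb{N}^n$ with $\ell_{i}< \ell_{i+1}$ for each $i \in [1, n-1]$. For $m \in \mathbb{N}_0$ and $i \in [1,n]$, define recursively \[k_{i}^{\overline{\ell}}(m) = \max\left\{0 , \left \lceil \frac{ m - ( \sum_{j=1}^{i-1} k_j^{\overline{\ell}}(m)\ell_j ) - \mathsf{s}_{\le \ell_{i}}(G) + 1}{\ell_i}\right \rceil \right\}\] and \[k_{n+1}^{\overline{\ell}}(m)= \max \left\{0, \left\lceil \frac{ m - \sum_{j=1}^{n} k_j^{\overline{\ell}}(m)\ell_j }{\mathsf{D}(G)}\right \rceil \right\}.\] (1) For every zero-sum sequence $B$ over $G$, $\max \mathsf{L}(B) \ge \sum_{i=1}^{n+1} k_i^{\overline{\ell}}(|B|)$. (2) Let $k \in \mathbb{N}$ and let $M\in \mathbb{N}$ be maximal such that $\sum_{i=1}^{n+1} k_i^{\overline{\ell}}(M) \le k$. Then $\mathsf{D}_{k}(G)\le M$.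
   Context: A sequence over $G$ is a finite unordered list of elements of $G$ with repetitions allowed; $|S|$ is its length. A zero-sum sequence has terms summing to $0$; a minimal zero-sum sequence is a non-empty zero-sum sequence with no proper non-empty zero-sum subsequence. For a zero-sum sequence $B$, $\mathsf{L}(B)$ is the set of all $t$ such that $B$ is a product of $t$ minimal zero-sum sequences. $\mathsf{D}_k(G)$ is the smallest $\ell$ such that every sequence of length at least $\ell$ has $k$ disjoint non-empty zero-sum subsequences; $\mathsf{D}(G)=\mathsf{D}_1(G)$. For $\ell\in\mathbb{N}$, $\mathsf{s}_{\le \ell}(G)\in\mathbb{N}\cup\{\infty\}$ is the smallest $n$ such that every sequence over $G$ of length at least $n$ has a non-empty zero-sum subsequence of length at most $\ell$. $[a,b]$ denotes the integers between $a$ and $b$. *)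

theory Defs
  imports Complex_Main "HOL-Library.Multiset" "HOL-Library.Extended_Nat"
begin

definition zero_sum :: "'a::ab_group_add multiset \<Rightarrow> bool" where
  "zero_sum S \<longleftrightarrow> sum_mset S = 0"

definition minimal_zero_sum :: "'a::ab_group_add multiset \<Rightarrow> bool" where
  "minimal_zero_sum S \<longleftrightarrow> S \<noteq> {#} \<and> zero_sum S \<and>
     (\<forall>T. T \<subseteq># S \<and> T \<noteq> {#} \<and> T \<noteq> S \<longrightarrow> \<not> zero_sum T)"

definition Lset :: "'a::ab_group_add multiset \<Rightarrow> nat set" where
  "Lset B = {t. \<exists>F :: 'a multiset multiset. sum_mset F = B \<and> size F = t \<and>
                  (\<forall>A\<in>#F. minimal_zero_sum A)}"

definition Dk :: "'a::ab_group_add itself \<Rightarrow> nat \<Rightarrow> nat" where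
  "Dk _ k = (LEAST l. \<forall>S :: 'a multiset. l \<le> size S \<longrightarrow>
      (\<exists>F :: 'a multiset multiset. size F = k \<and> sum_mset F \<subseteq># S \<and>
          (\<forall>A\<in>#F. A \<noteq> {#} \<and> zero_sum A)))"

definition Dav :: "'a::ab_group_add itself \<Rightarrow> nat" where
  "Dav G = Dk G 1"

definition s_le :: "'a::ab_group_add itself \<Rightarrow> nat \<Rightarrow> enat" where
  "s_le _ l = (if \<exists>n. \<forall>S :: 'a multiset. n \<le> size S \<longrightarrow>
                   (\<exists>T. T \<subseteq># S \<and> T \<noteq> {#} \<and> zero_sum T \<and> size T \<le> l)
     then enat (LEAST n. \<forall>S :: 'a multiset. n \<le> size S \<longrightarrow>
                   (\<exists>T. T \<subseteq># S \<and> T \<noteq> {#} \<and> zero_sum T \<and> size T \<le> l))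
     else \<infinity>)"

text \<open>kpart s ls r computes [k_1,...,k_n], where r is the current remainder
  m - sum_{j<i} k_j l_j. If s_{\<le> l_i} = \<infinity> the ceiling is -\<infinity> and k_i = 0.
  nat of an integer realises max{0, -}.\<close>
fun kpart :: "(nat \<Rightarrow> enat) \<Rightarrow> nat list \<Rightarrow> int \<Rightarrow> nat list" where
  "kpart s [] r = []"
| "kpart s (l # ls) r =
     (let k = (case s l of \<infinity> \<Rightarrow> 0
                | enat v \<Rightarrow> nat \<lceil>real_of_int (r - int v + 1) / real l\<rceil>)
      in k # kpart s ls (r - int k * int l))"

definition ktot :: "(nat \<Rightarrow> enat) \<Rightarrow> nat \<Rightarrow> nat list \<Rightarrow> nat \<Rightarrow> nat" where
  "ktot s D ls m =
     (let ks = kpart s ls (int m);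
          rest = int m - (\<Sum>(k, l)\<leftarrow>zip ks ls. int k * int l)
      in sum_list ks + nat \<lceil>real_of_int rest / real D\<rceil>)"

end

theory Submission imports Defs begin

lemma zs_exists:
  fixes S :: "'a::{finite,ab_group_add} multiset"
  assumes "card (UNIV::'a set) \<le> size S"
  shows "\<exists>T. T \<subseteq># S \<and> T \<noteq> {#} \<and> zero_sum T"
proof -
  obtain xs where xs: "mset xs = S" using ex_mset by blast
  define n where "n = length xs"
  define f where "f i = sum_list (take i xs)" for i
  have "\<not> inj_on f {0..n}"
  proof
    assume "inj_on f {0..n}"
    then have "card {0..n} \<le> card (UNIV::'a set)"
      by (intro card_inj_on_le) auto
    then show False using assms xs n_def by auto
  qed
  then obtain i j where ij: "i \<in> {0..n}" "j \<in> {0..n}" "i \<noteq> j" "f i = f j"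
    unfolding inj_on_def by blast
  then obtain a b where ab: "a < b" "b \<le> n" "f a = f b"
    by (metis atLeastAtMost_iff linorder_neqE_nat)
  define T where "T = mset (drop a (take b xs))"
  have "take b xs = take a xs @ drop a (take b xs)"
    using ab by (metis append_take_drop_id less_imp_le_nat min.absorb1 take_take)
  then have "sum_list (take b xs) = sum_list (take a xs) + sum_list (drop a (take b xs))"
    by (metis sum_list_append)
  then have "sum_list (drop a (take b xs)) = 0" using ab f_def by simp
  then have "zero_sum T" unfolding T_def zero_sum_def by (simp add: sum_mset_sum_list)
  moreover have "T \<noteq> {#}" using ab n_def T_def by auto
  moreover have "T \<subseteq># S"
  proof -
    have "mset (drop a (take b xs)) \<subseteq># mset (take b xs)"
      by (metis append_take_drop_id mset_append mset_subset_eq_add_right)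
    also have "\<dots> \<subseteq># mset xs"
      by (metis append_take_drop_id mset_append mset_subset_eq_add_left)
    finally show ?thesis using xs T_def by simp
  qed
  ultimately show ?thesis by blast
qed

lemma Dav_prop:
  fixes S :: "'a::{finite,ab_group_add} multiset"
  assumes "Dav TYPE('a) \<le> size S"
  shows "\<exists>T. T \<subseteq># S \<and> T \<noteq> {#} \<and> zero_sum T"
proof -
  let ?P = "\<lambda>l. \<forall>S :: 'a multiset. l \<le> size S \<longrightarrow>
      (\<exists>F :: 'a multiset multiset. size F = 1 \<and> sum_mset F \<subseteq># S \<and>
          (\<forall>A\<in>#F. A \<noteq> {#} \<and> zero_sum A))"
  have "?P (card (UNIV::'a set))"
  proof (intro allI impI)
    fix S :: "'a multiset" assume "card (UNIV::'a set) \<le> size S"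
    then obtain T where "T \<subseteq># S \<and> T \<noteq> {#} \<and> zero_sum T" using zs_exists by blast
    then show "\<exists>F :: 'a multiset multiset. size F = 1 \<and> sum_mset F \<subseteq># S \<and>
          (\<forall>A\<in>#F. A \<noteq> {#} \<and> zero_sum A)" by (intro exI[of _ "{#T#}"]) auto
  qed
  then have "?P (Dav TYPE('a))" unfolding Dav_def Dk_def by (rule LeastI)
  then obtain F :: "'a multiset multiset" where F: "size F = 1" "sum_mset F \<subseteq># S" "\<forall>A\<in>#F. A \<noteq> {#} \<and> zero_sum A"
    using assms by blast
  then obtain T where "F = {#T#}" by (metis size_1_singleton_mset)
  then show ?thesis using F by auto
qed

lemma minimal_size:
  fixes A :: "'a::{finite,ab_group_add} multiset"
  assumes "minimal_zero_sum A"
  shows "size A \<le> Dav TYPE('a)"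
proof (rule ccontr)
  assume na: "\<not> ?thesis"
  from assms obtain a where a: "a \<in># A" unfolding minimal_zero_sum_def by fastforce
  let ?A = "A - {#a#}"
  have "Dav TYPE('a) \<le> size ?A" using na a by (simp add: size_Diff_singleton)
  then obtain T where T: "T \<subseteq># ?A" "T \<noteq> {#}" "zero_sum T" using Dav_prop by blast
  have "T \<subseteq># A" using T(1) by (meson subset_mset.order_trans diff_subset_eq_self)
  moreover have "T \<noteq> A"
  proof
    assume "T = A" then have "size A \<le> size ?A" using T(1) by (simp add: size_mset_mono)
    then show False using size_Diff1_less[OF a] by simp
  qed
  ultimately show False using assms T unfolding minimal_zero_sum_def by blast
qed

lemma has_minimal:
  fixes T :: "'a::ab_group_add multiset"
  shows "T \<noteq> {#} \<Longrightarrow> zero_sum T \<Longrightarrow> \<exists>U. U \<subseteq># T \<and> minimal_zero_sum U"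
proof (induction "size T" arbitrary: T rule: less_induct)
  case less
  show ?case
  proof (cases "minimal_zero_sum T")
    case True then show ?thesis by blast
  next
    case False
    then obtain T' where T': "T' \<subseteq># T" "T' \<noteq> {#}" "T' \<noteq> T" "zero_sum T'"
      using less.prems unfolding minimal_zero_sum_def by blast
    then have "size T' < size T" by (simp add: mset_subset_size subset_mset.le_neq_trans)
    then obtain U where "U \<subseteq># T'" "minimal_zero_sum U" using less.hyps T' by blast
    then show ?thesis using T' by (meson subset_mset.order_trans)
  qed
qed

lemma factor:
  fixes S :: "'a::ab_group_add multiset"
  shows "zero_sum S \<Longrightarrow> \<exists>F. sum_mset F = S \<and> (\<forall>A\<in>#F. minimal_zero_sum A)"
proof (induction "size S" arbitrary: S rule: less_induct)
  case less
  show ?case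
  proof (cases "S = {#}")
    case True then show ?thesis by (intro exI[of _ "{#}"]) auto
  next
    case False
    then obtain U where U: "U \<subseteq># S" "minimal_zero_sum U" using has_minimal less.prems by blast
    then have "U \<noteq> {#}" unfolding minimal_zero_sum_def by auto
    then have "size (S - U) < size S" using U size_mset_mono[OF U(1)]
      by (simp add: size_Diff_submset nonempty_has_size)
    moreover have "zero_sum (S - U)" using U less.prems unfolding zero_sum_def minimal_zero_sum_def
      by (metis add_diff_cancel_left' mset_subset_eq_exists_conv sum_mset.union add_0)
    ultimately obtain F where "sum_mset F = S - U" "\<forall>A\<in>#F. minimal_zero_sum A" using less.hyps by blast
    then show ?thesis using U by (intro exI[of _ "add_mset U F"]) (auto simp: subset_mset.add_diff_inverse)
  qed
qed


lemma sle_prop: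
  fixes S :: "'a::ab_group_add multiset"
  assumes "s_le TYPE('a) l = enat v" "v \<le> size S"
  shows "\<exists>T. T \<subseteq># S \<and> T \<noteq> {#} \<and> zero_sum T \<and> size T \<le> l"
proof -
  let ?P = "\<lambda>n. \<forall>S :: 'a multiset. n \<le> size S \<longrightarrow>
                   (\<exists>T. T \<subseteq># S \<and> T \<noteq> {#} \<and> zero_sum T \<and> size T \<le> l)"
  have def: "s_le TYPE('a) l = (if \<exists>n. ?P n then enat (LEAST n. ?P n) else \<infinity>)"
    unfolding s_le_def by (rule refl)
  have ex: "\<exists>n. ?P n"
  proof (rule ccontr)
    assume ne: "\<not> (\<exists>n. ?P n)"
    have "s_le TYPE('a) l = \<infinity>" unfolding def by (rule if_not_P[OF ne])
    then show False using assms(1) by simp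
  qed
  have "s_le TYPE('a) l = enat (LEAST n. ?P n)" unfolding def by (rule if_P[OF ex])
  then have vd: "v = (LEAST n. ?P n)" using assms(1) by simp
  have "?P v" unfolding vd by (rule LeastI_ex[OF ex])
  then show ?thesis using assms(2) by blast
qed

lemma size_sum_ge: "(\<forall>A\<in>#F. c \<le> size A) \<Longrightarrow> size F * c \<le> size (sum_mset (F :: 'b multiset multiset))"
  by (induction F) (auto simp: add_mono)

lemma size_sum_le: "(\<forall>A\<in>#F. size A \<le> c) \<Longrightarrow> size (sum_mset (F :: 'b multiset multiset)) \<le> size F * c"
  by (induction F) (auto simp: add_mono)

lemma Lset_bound:
  fixes S :: "'a::ab_group_add multiset"
  shows "Lset S \<subseteq> {..size S}"
proof
  fix t assume "t \<in> Lset S"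
  then obtain F where F: "sum_mset F = S" "size F = t" "\<forall>A\<in>#F. minimal_zero_sum A"
    unfolding Lset_def by blast
  then have "\<forall>A\<in>#F. 1 \<le> size A" unfolding minimal_zero_sum_def
    by (simp add: Suc_le_eq nonempty_has_size)
  then show "t \<in> {..size S}" using size_sum_ge[of F 1] F by auto
qed

lemma Lset_Max:
  fixes S :: "'a::ab_group_add multiset"
  shows "t \<in> Lset S \<Longrightarrow> t \<le> Max (Lset S)"
  using Lset_bound[of S] by (meson Max_ge finite_atMost finite_subset)

lemma Lset_le_D:
  fixes S :: "'a::{finite,ab_group_add} multiset"
  shows "t \<in> Lset S \<Longrightarrow> size S \<le> t * Dav TYPE('a)"
  unfolding Lset_def using size_sum_le minimal_size by blast

lemma Lset_add:
  fixes S :: "'a::ab_group_add multiset"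
  assumes "t \<in> Lset S'" "\<forall>A\<in>#F. minimal_zero_sum A"
  shows "t + size F \<in> Lset (sum_mset F + S')"
proof -
  obtain G where G: "sum_mset G = S'" "size G = t" "\<forall>A\<in>#G. minimal_zero_sum A"
    using assms(1) unfolding Lset_def by blast
  show ?thesis unfolding Lset_def
    using G assms(2) by (auto intro!: exI[of _ "F + G"])
qed

lemma extract_lem:
  fixes S :: "'a::ab_group_add multiset"
  assumes "s_le TYPE('a) l = enat v" "r \<le> int (size S)"
  shows "j \<le> nat \<lceil>real_of_int (r - int v + 1) / real l\<rceil> \<Longrightarrow>
     \<exists>F. size F = j \<and> sum_mset F \<subseteq># S \<and> (\<forall>A\<in>#F. minimal_zero_sum A \<and> size A \<le> l)"
proof (induction j)
  case 0 then show ?case by (intro exI[of _ "{#}"]) auto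
next
  case (Suc j)
  then obtain F where F: "size F = j" "sum_mset F \<subseteq># S" "\<forall>A\<in>#F. minimal_zero_sum A \<and> size A \<le> l"
    by auto
  have lpos: "l > 0"
  proof (rule ccontr)
    assume "\<not> l > 0" then have "l = 0" by simp
    then show False using Suc.prems by simp
  qed
  have "real j < real_of_int (r - int v + 1) / real l"
    using Suc.prems by linarith
  then have "real j * real l < real_of_int (r - int v + 1)" using lpos by (simp add: field_simps)
  then have "real_of_int (int j * int l) < real_of_int (r - int v + 1)" by simp
  then have "int j * int l < r - int v + 1" by (simp only: of_int_less_iff)
  then have jl: "int j * int l \<le> r - int v" by linarith
  have "size (sum_mset F) \<le> j * l" using size_sum_le[of F l] F by auto
  then have i1: "int (size (sum_mset F)) \<le> int j * int l"
    by (metis of_nat_le_iff of_nat_mult)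
  have "size (sum_mset F) \<le> size S" using F(2) by (rule size_mset_mono)
  then have "int (size (S - sum_mset F)) = int (size S) - int (size (sum_mset F))"
    using F(2) by (simp add: size_Diff_submset of_nat_diff)
  then have "v \<le> size (S - sum_mset F)" using i1 assms(2) jl by linarith
  then obtain T where T: "T \<subseteq># S - sum_mset F" "T \<noteq> {#}" "zero_sum T" "size T \<le> l"
    using sle_prop assms(1) by blast
  then obtain U where U: "U \<subseteq># T" "minimal_zero_sum U" using has_minimal by blast
  have "U \<subseteq># S - sum_mset F" using U T by (meson subset_mset.order_trans)
  then have "sum_mset (add_mset U F) \<subseteq># S" using F(2)
    by (simp add: subset_mset.le_diff_conv2 add.commute)
  moreover have "size U \<le> l" using U T size_mset_mono by (meson le_trans)
  ultimately show ?case using F U by (intro exI[of _ "add_mset U F"]) auto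
qed


lemma main:
  fixes S :: "'a::{finite,ab_group_add} multiset"
  shows "zero_sum S \<Longrightarrow> r \<le> int (size S) \<Longrightarrow> \<exists>t\<in>Lset S.
    sum_list (kpart (s_le TYPE('a)) ls r) +
    nat \<lceil>real_of_int (r - (\<Sum>(k, l)\<leftarrow>zip (kpart (s_le TYPE('a)) ls r) ls. int k * int l)) / real (Dav TYPE('a))\<rceil> \<le> t"
proof (induction ls arbitrary: S r)
  case Nil
  obtain F where F: "sum_mset F = S" "\<forall>A\<in>#F. minimal_zero_sum A" using factor Nil.prems by blast
  then have t: "size F \<in> Lset S" unfolding Lset_def by blast
  have "nat \<lceil>real_of_int r / real (Dav TYPE('a))\<rceil> \<le> size F"
  proof (cases "Dav TYPE('a) = 0")
    case True then show ?thesis by simp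
  next
    case False
    have "r \<le> int (size F * Dav TYPE('a))" using Lset_le_D[OF t] Nil.prems by linarith
    then have "real_of_int r \<le> real (size F) * real (Dav TYPE('a))"
      by (metis of_int_le_iff of_int_of_nat_eq of_nat_mult)
    then have "real_of_int r / real (Dav TYPE('a)) \<le> real (size F)" using False
      by (simp add: divide_le_eq)
    then show ?thesis by (simp add: ceiling_le_iff nat_le_iff)
  qed
  then show ?case using t by auto
next
  case (Cons l ls)
  show ?case
  proof (cases "s_le TYPE('a) l")
    case infinity
    then have e: "kpart (s_le TYPE('a)) (l # ls) r = 0 # kpart (s_le TYPE('a)) ls r" by simp
    show ?thesis unfolding e using Cons.IH[OF Cons.prems] by simp
  next
    case (enat v)
    define k where "k = nat \<lceil>real_of_int (r - int v + 1) / real l\<rceil>"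
    have e: "kpart (s_le TYPE('a)) (l # ls) r = k # kpart (s_le TYPE('a)) ls (r - int k * int l)"
      using enat k_def by (simp add: Let_def)
    obtain F where F: "size F = k" "sum_mset F \<subseteq># S" "\<forall>A\<in>#F. minimal_zero_sum A \<and> size A \<le> l"
      using extract_lem[OF enat Cons.prems(2), of k] k_def by blast
    define S' where "S' = S - sum_mset F"
    have SS: "S = sum_mset F + S'" using F(2) S'_def by (simp add: subset_mset.add_diff_inverse)
    have zF: "sum_mset (sum_mset F) = 0" using F(3)
      unfolding minimal_zero_sum_def zero_sum_def by (induction F) auto
    have zS': "zero_sum S'" using Cons.prems(1) SS zF unfolding zero_sum_def by simp
    have "size (sum_mset F) \<le> k * l" using size_sum_le[of F l] F by auto
    then have i1: "int (size (sum_mset F)) \<le> int k * int l"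
      by (metis of_nat_le_iff of_nat_mult)
    have "size S = size (sum_mset F) + size S'" using SS by simp
    then have sz: "r - int k * int l \<le> int (size S')" using i1 Cons.prems(2) by linarith
    obtain t where t: "t \<in> Lset S'" and tb:
      "sum_list (kpart (s_le TYPE('a)) ls (r - int k * int l)) +
    nat \<lceil>real_of_int ((r - int k * int l) - (\<Sum>(k, l)\<leftarrow>zip (kpart (s_le TYPE('a)) ls (r - int k * int l)) ls. int k * int l)) / real (Dav TYPE('a))\<rceil> \<le> t"
      using Cons.IH[OF zS' sz] by blast
    have "t + size F \<in> Lset S" using Lset_add[OF t] F(3) SS by auto
    then show ?thesis unfolding e using tb F(1)
      by (intro bexI[of _ "t + size F"]) (auto simp: algebra_simps)
  qed
qed

lemma sub_size:
  fixes X :: "'b multiset"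
  assumes "k \<le> size X"
  shows "\<exists>Y. Y \<subseteq># X \<and> size Y = k"
proof -
  obtain xs where xs: "mset xs = X" using ex_mset by blast
  have "mset (take k xs) \<subseteq># mset xs"
    by (metis append_take_drop_id mset_append mset_subset_eq_add_left)
  moreover have "size (mset (take k xs)) = k" using assms xs by auto
  ultimately show ?thesis using xs by blast
qed

lemma part1:
  fixes B :: "'a::{finite,ab_group_add} multiset"
  assumes "zero_sum B"
  shows "\<exists>t\<in>Lset B. ktot (s_le TYPE('a)) (Dav TYPE('a)) ls (size B) \<le> t"
  using main[OF assms, of "int (size B)" ls] unfolding ktot_def Let_def by simp

lemma part2:
  fixes S :: "'a::{finite,ab_group_add} multiset"
  assumes "M \<le> size S" and big: "k < ktot (s_le TYPE('a)) (Dav TYPE('a)) ls (M + 1)"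
  shows "\<exists>F :: 'a multiset multiset. size F = k \<and> sum_mset F \<subseteq># S \<and>
          (\<forall>A\<in>#F. A \<noteq> {#} \<and> zero_sum A)"
proof -
  obtain S0 where S0: "S0 \<subseteq># S" "size S0 = M" using sub_size assms(1) by blast
  define g where "g = - sum_mset S0"
  define B where "B = add_mset g S0"
  have zB: "zero_sum B" unfolding B_def g_def zero_sum_def by simp
  have sB: "size B = M + 1" using S0 B_def by simp
  obtain t where t: "t \<in> Lset B" "ktot (s_le TYPE('a)) (Dav TYPE('a)) ls (M + 1) \<le> t"
    using part1[OF zB, of ls] sB by auto
  obtain G where G: "sum_mset G = B" "size G = t" "\<forall>A\<in>#G. minimal_zero_sum A"
    using t(1) unfolding Lset_def by blast
  have "g \<in># sum_mset G" using G(1) B_def by simp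
  then obtain A0 where A0: "A0 \<in># G" "g \<in># A0" by auto
  define G' where "G' = G - {#A0#}"
  have GG: "G = add_mset A0 G'" using A0 G'_def by simp
  have "size G' \<ge> k" using GG G(2) t(2) big by simp
  then obtain F where F: "F \<subseteq># G'" "size F = k" using sub_size by blast
  define A' where "A' = A0 - {#g#}"
  have AA: "A0 = add_mset g A'" using A0 A'_def by simp
  have "add_mset g S0 = add_mset g (A' + sum_mset G')" using G(1) GG AA B_def by simp
  then have "S0 = A' + sum_mset G'" by simp
  then have "sum_mset G' \<subseteq># S0" by simp
  moreover have "sum_mset F \<subseteq># sum_mset G'"
    using F(1) by (metis mset_subset_eq_exists_conv sum_mset.union)
  ultimately have "sum_mset F \<subseteq># S" using S0(1) by (meson subset_mset.order_trans)
  moreover have "\<forall>A\<in>#F. A \<noteq> {#} \<and> zero_sum A"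
    using F(1) G(3) GG unfolding minimal_zero_sum_def by (auto dest: mset_subset_eqD)
  ultimately show ?thesis using F(2) by blast
qed

theorem proposition3p2:
  fixes ls :: "nat list"
  assumes "\<forall>l\<in>set ls. 0 < l"
    and "sorted_wrt (<) ls"
  shows "(\<forall>B :: ('a::{finite, ab_group_add}) multiset. zero_sum B \<longrightarrow>
            ktot (s_le TYPE('a)) (Dav TYPE('a)) ls (size B) \<le> Max (Lset B))
       \<and> (\<forall>k M. 1 \<le> k \<longrightarrow> 1 \<le> M \<longrightarrow>
            ktot (s_le TYPE('a)) (Dav TYPE('a)) ls M \<le> k \<longrightarrow>
            (\<forall>M'. 1 \<le> M' \<and> ktot (s_le TYPE('a)) (Dav TYPE('a)) ls M' \<le> k \<longrightarrow> M' \<le> M) \<longrightarrow>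
            Dk TYPE('a) k \<le> M)"
proof (intro conjI allI impI)
  fix B :: "'a multiset" assume "zero_sum B"
  then obtain t where "t \<in> Lset B" "ktot (s_le TYPE('a)) (Dav TYPE('a)) ls (size B) \<le> t"
    using part1 by blast
  then show "ktot (s_le TYPE('a)) (Dav TYPE('a)) ls (size B) \<le> Max (Lset B)"
    using Lset_Max by (meson le_trans)
next
  fix k M :: nat
  assume max: "\<forall>M'. 1 \<le> M' \<and> ktot (s_le TYPE('a)) (Dav TYPE('a)) ls M' \<le> k \<longrightarrow> M' \<le> M"
  have big: "k < ktot (s_le TYPE('a)) (Dav TYPE('a)) ls (M + 1)"
    using max[rule_format, of "M + 1"] by linarith
  show "Dk TYPE('a) k \<le> M" unfolding Dk_def
    by (rule Least_le) (use part2[OF _ big] in blast)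
qed

end
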